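(* For positive integers $n,m,k$ with $k<m<2k$, $$N_P(n,k,m)\ \ge\ \Bigl(2k-m+\frac{1}{\binom{m-1}{2k-m}}\Bigr)n.$$
   Context: Fix a finite field $\mathbb{F}_q$; $[n]=\{1,\dots,n\}$. An $(n,N,k,m)$-PIR array code over $\mathbb{F}_q$ is an $\mathbb{F}_q$-linear map $\mathcal{C}:\mathbf x\in\mathbb{F}_q^n\mapsto(\mathbf c_1,\dots,\mathbf c_m)$ with buckets $\mathbf c_\ell\in\mathbb{F}_q^{N_\ell}$, $N_\ell\ge1$ independent of $\mathbf x$, $\sum_\ell N_\ell=N$, such that for every $i\in[n]$ there is a partition of $[m]$ into $k$ sets $R_1,\dots,R_k$ such that for each $j$, $x_i$ is an $\mathbb{F}_q$-linear combination of values $f_\ell(\mathbf c_\ell)$, $\ell\in R_j$, for some linear functionals $f_\ell:\mathbb{F}_q^{N_\ell}\to\mathbb{F}_q$ (independent of $\mathbf x$). $N_P(n,k,m)$ denotes the minimum $N$ for which an $(n,N,k,m)$-PIR array code over $\mathbb{F}_q$ exists. *)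

theory Defs
  imports Complex_Main
begin

text \<open>The finite field F_q is a type 'a of class {finite, field}.
Messages x are functions nat => 'a, of which only the entries x 1, ..., x n matter.
Buckets are indexed by 1..m, bucket l has Nb l coordinates indexed by 1..Nb l.
The linear encoding map is given by its coefficient matrix G:
coordinate t of bucket l equals  sum over s in 1..n of  G l t s * x s.
A linear functional on F_q^(Nb l) is given by its coefficient vector.\<close>

definition bucket_val ::
  "nat \<Rightarrow> (nat \<Rightarrow> nat \<Rightarrow> nat \<Rightarrow> 'a::field) \<Rightarrow> (nat \<Rightarrow> 'a) \<Rightarrow> nat \<Rightarrow> nat \<Rightarrow> 'a" where
  "bucket_val n G x l t = (\<Sum>s\<in>{1..n}. G l t s * x s)"

definition is_partition_into :: "nat \<Rightarrow> nat set \<Rightarrow> (nat \<Rightarrow> nat set) \<Rightarrow> bool" where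
  "is_partition_into k M R \<longleftrightarrow>
     (\<forall>j\<in>{1..k}. R j \<noteq> {}) \<and>
     (\<Union>j\<in>{1..k}. R j) = M \<and>
     (\<forall>j\<in>{1..k}. \<forall>j'\<in>{1..k}. j \<noteq> j' \<longrightarrow> R j \<inter> R j' = {})"

text \<open>(n, N, k, m)-PIR array code with bucket sizes Nb (so N = sum of Nb l, l = 1..m)
and encoding matrix G.\<close>
definition is_PIR_array_code ::
  "nat \<Rightarrow> nat \<Rightarrow> nat \<Rightarrow> (nat \<Rightarrow> nat) \<Rightarrow> (nat \<Rightarrow> nat \<Rightarrow> nat \<Rightarrow> 'a::{finite,field}) \<Rightarrow> bool" where
  "is_PIR_array_code n k m Nb G \<longleftrightarrow>
     (\<forall>l\<in>{1..m}. Nb l \<ge> 1) \<and>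
     (\<forall>i\<in>{1..n}. \<exists>R. is_partition_into k {1..m} R \<and>
        (\<forall>j\<in>{1..k}. \<exists>(f :: nat \<Rightarrow> nat \<Rightarrow> 'a) (a :: nat \<Rightarrow> 'a).
           \<forall>x :: nat \<Rightarrow> 'a.
             x i = (\<Sum>l\<in>R j. a l * (\<Sum>t\<in>{1..Nb l}. f l t * bucket_val n G x l t))))"

definition N_P :: "'a::{finite,field} itself \<Rightarrow> nat \<Rightarrow> nat \<Rightarrow> nat \<Rightarrow> nat" where
  "N_P _ n k m = (LEAST N. \<exists>Nb (G :: nat \<Rightarrow> nat \<Rightarrow> nat \<Rightarrow> 'a).
       is_PIR_array_code n k m Nb G \<and> (\<Sum>l\<in>{1..m}. Nb l) = N)"

end

theory Submission
  imports Defs "HOL-Library.FuncSet"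
begin

locale pir =
  fixes n k m :: nat and Nb :: "nat \<Rightarrow> nat" and G :: "nat \<Rightarrow> nat \<Rightarrow> nat \<Rightarrow> 'a::{finite,field}"
  assumes code: "is_PIR_array_code n k m Nb G" and km: "k < m" "m < 2*k"
begin

definition rw :: "nat \<Rightarrow> nat \<Rightarrow> nat \<Rightarrow> 'a" where
  "rw l t s = (if s \<in> {1..n} then G l t s else 0)"
definition lin :: "nat \<Rightarrow> (nat \<Rightarrow> 'a) \<Rightarrow> nat \<Rightarrow> 'a" where
  "lin l f = (\<lambda>s. \<Sum>t\<in>{1..Nb l}. f t * rw l t s)"
definition V :: "nat \<Rightarrow> (nat \<Rightarrow> 'a) set" where "V l = range (lin l)"
definition uv :: "nat \<Rightarrow> nat \<Rightarrow> 'a" where "uv i = (\<lambda>s. if s = i then 1 else 0)"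
definition prj :: "nat set \<Rightarrow> (nat \<Rightarrow> 'a) \<Rightarrow> nat \<Rightarrow> 'a" where
  "prj A v = (\<lambda>s. if s \<in> A then v s else 0)"

lemma recover:
  assumes i: "i \<in> {1..n}"
  shows "\<exists>R. is_partition_into k {1..m} R \<and>
     (\<forall>j\<in>{1..k}. \<exists>h. uv i = (\<lambda>s. \<Sum>l\<in>R j. lin l (h l) s))"
proof -
  from code i obtain R where R: "is_partition_into k {1..m} R" and
    rec: "\<forall>j\<in>{1..k}. \<exists>(f :: nat \<Rightarrow> nat \<Rightarrow> 'a) (a :: nat \<Rightarrow> 'a).
           \<forall>x :: nat \<Rightarrow> 'a.
             x i = (\<Sum>l\<in>R j. a l * (\<Sum>t\<in>{1..Nb l}. f l t * bucket_val n G x l t))"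
    unfolding is_PIR_array_code_def by blast
  have "\<exists>h. uv i = (\<lambda>s. \<Sum>l\<in>R j. lin l (h l) s)" if j: "j \<in> {1..k}" for j
  proof -
    from rec j obtain f a where fa: "\<And>x :: nat \<Rightarrow> 'a.
             x i = (\<Sum>l\<in>R j. a l * (\<Sum>t\<in>{1..Nb l}. f l t * bucket_val n G x l t))" by blast
    have bv: "bucket_val n G (uv s) l t = rw l t s" for s l t
      unfolding bucket_val_def rw_def uv_def
      by (auto simp: if_distrib[where f="\<lambda>y. _ * y"] cong: if_cong)
    show ?thesis
    proof (intro exI[of _ "\<lambda>l t. a l * f l t"] ext)
      fix s
      show "uv i s = (\<Sum>l\<in>R j. lin l (\<lambda>t. a l * f l t) s)"
      proof (cases "s \<in> {1..n}")
        case True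
        have "uv i s = uv s i" by (simp add: uv_def)
        also have "\<dots> = (\<Sum>l\<in>R j. a l * (\<Sum>t\<in>{1..Nb l}. f l t * rw l t s))"
          using fa[of "uv s"] by (simp add: bv)
        also have "\<dots> = (\<Sum>l\<in>R j. lin l (\<lambda>t. a l * f l t) s)"
          by (simp add: lin_def sum_distrib_left mult.assoc)
        finally show ?thesis .
      next
        case False
        with i have "s \<noteq> i" by auto
        moreover have "\<And>l t. rw l t s = 0" using False unfolding rw_def by auto
        ultimately show ?thesis by (simp add: uv_def lin_def)
      qed
    qed
  qed
  with R show ?thesis by blast
qed

lemma lin_restrict: "lin l f = lin l (restrict f {1..Nb l})"
  unfolding lin_def by (intro ext sum.cong) auto

lemma V_eq: "V l = lin l ` (PiE {1..Nb l} (\<lambda>_. UNIV))"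
proof
  show "V l \<subseteq> lin l ` (PiE {1..Nb l} (\<lambda>_. UNIV))"
    unfolding V_def
  proof
    fix v assume "v \<in> range (lin l)"
    then obtain f where "v = lin l f" by auto
    then have "v = lin l (restrict f {1..Nb l})" using lin_restrict by simp
    then show "v \<in> lin l ` (PiE {1..Nb l} (\<lambda>_. UNIV))" by auto
  qed
qed (auto simp: V_def)

lemma finite_V: "finite (V l)"
  unfolding V_eq by (intro finite_imageI finite_PiE) auto

lemma card_V: "card (V l) \<le> card (UNIV::'a set) ^ Nb l"
proof -
  have "card (V l) \<le> card (PiE {1..Nb l} (\<lambda>_. (UNIV::'a set)))"
    unfolding V_eq by (intro card_image_le finite_PiE) auto
  also have "\<dots> = card (UNIV::'a set) ^ Nb l" by (simp add: card_PiE)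
  finally show ?thesis .
qed

lemma lin_add: "(\<lambda>s. lin l f s + lin l g s) = lin l (\<lambda>t. f t + g t)"
  unfolding lin_def by (auto simp: sum.distrib distrib_right)

lemma lin_zero: "lin l (\<lambda>_. 0) = (\<lambda>_. 0)"
  unfolding lin_def by auto

lemma V_add: "u \<in> V l \<Longrightarrow> w \<in> V l \<Longrightarrow> (\<lambda>s. u s + w s) \<in> V l"
  unfolding V_def using lin_add by auto

lemma V_nonempty: "V l \<noteq> {}"
  unfolding V_def by auto

lemma G1:
  assumes A: "finite A" and L: "finite L"
    and h: "\<And>i. i \<in> A \<Longrightarrow> uv i = (\<lambda>s. \<Sum>l\<in>L. lin l (h i l) s)"
  shows "prj A c = (\<lambda>s. \<Sum>l\<in>L. lin l (\<lambda>t. \<Sum>i\<in>A. c i * h i l t) s)"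
proof
  fix s
  have "(\<Sum>l\<in>L. lin l (\<lambda>t. \<Sum>i\<in>A. c i * h i l t) s)
      = (\<Sum>l\<in>L. \<Sum>t\<in>{1..Nb l}. \<Sum>i\<in>A. c i * (h i l t * rw l t s))"
    unfolding lin_def by (simp add: sum_distrib_right mult.assoc)
  also have "\<dots> = (\<Sum>i\<in>A. c i * (\<Sum>l\<in>L. lin l (h i l) s))"
    unfolding lin_def
    by (simp add: sum_distrib_left sum.swap[of _ A] sum.swap[of _ A "{1.._}"])
  also have "\<dots> = (\<Sum>i\<in>A. c i * uv i s)"
    using h by (intro sum.cong refl) (metis)
  also have "\<dots> = prj A c s"
    using A by (simp add: uv_def prj_def if_distrib[where f="\<lambda>y. _ * y"] cong: if_cong)
  finally show "prj A c s = (\<Sum>l\<in>L. lin l (\<lambda>t. \<Sum>i\<in>A. c i * h i l t) s)" by simp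
qed

lemma card_E: "finite A \<Longrightarrow> card (range (prj A)) = card (UNIV::'a set) ^ card A"
proof -
  assume A: "finite A"
  have "range (prj A) = prj A ` (PiE A (\<lambda>_. UNIV))"
  proof
    show "range (prj A) \<subseteq> prj A ` (PiE A (\<lambda>_. UNIV))"
    proof
      fix v assume "v \<in> range (prj A)"
      then obtain c where "v = prj A c" by auto
      then have "v = prj A (restrict c A)" by (auto simp: prj_def)
      then show "v \<in> prj A ` (PiE A (\<lambda>_. UNIV))" by auto
    qed
  qed auto
  moreover have "inj_on (prj A) (PiE A (\<lambda>_. UNIV))"
  proof
    fix c d assume c: "c \<in> PiE A (\<lambda>_. (UNIV::'a set))" and d: "d \<in> PiE A (\<lambda>_. (UNIV::'a set))"
      and e: "prj A c = prj A d"
    show "c = d"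
    proof
      fix x show "c x = d x"
        using c d fun_cong[OF e, of x] by (cases "x \<in> A") (auto simp: prj_def PiE_def extensional_def)
    qed
  qed
  ultimately show ?thesis using A by (simp add: card_image card_PiE)
qed

lemma E_sub_V:
  assumes A: "finite A" and inV: "\<forall>i\<in>A. uv i \<in> V l"
  shows "range (prj A) \<subseteq> V l"
proof -
  from inV have "\<forall>i\<in>A. \<exists>g. uv i = lin l g" unfolding V_def by auto
  then obtain g where g: "\<And>i. i \<in> A \<Longrightarrow> uv i = lin l (g i)" by metis
  have h: "uv i = (\<lambda>s. \<Sum>l'\<in>{l}. lin l' ((\<lambda>i l'. g i) i l') s)" if "i \<in> A" for i
    using g[OF that] by simp
  show ?thesis
  proof
    fix v assume "v \<in> range (prj A)"
    then obtain c where v: "v = prj A c" by auto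
    have "v = (\<lambda>s. \<Sum>l'\<in>{l}. lin l' (\<lambda>t. \<Sum>i\<in>A. c i * (\<lambda>i l'. g i) i l' t) s)"
      unfolding v by (rule G1[OF A _ h]) auto
    then have "v = lin l (\<lambda>t. \<Sum>i\<in>A. c i * g i t)" by simp
    then show "v \<in> V l" unfolding V_def by auto
  qed
qed

lemma F3:
  assumes A: "finite A" and AB: "A \<inter> B = {}" and inV: "\<forall>i\<in>A. uv i \<in> V l"
  shows "card (UNIV::'a set) ^ card A * card (prj B ` V l) \<le> card (V l)"
proof -
  define E where "E = range (prj A)"
  define P where "P = prj B ` V l"
  define \<sigma> where "\<sigma> w = (SOME v. v \<in> V l \<and> prj B v = w)" for w
  have \<sigma>: "\<sigma> w \<in> V l \<and> prj B (\<sigma> w) = w" if "w \<in> P" for w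
  proof -
    from that obtain x where "x \<in> V l" "w = prj B x" unfolding P_def by auto
    then have "\<exists>v. v \<in> V l \<and> prj B v = w" by auto
    then show ?thesis unfolding \<sigma>_def by (rule someI_ex)
  qed
  define \<phi> where "\<phi> p = (\<lambda>s. fst p s + \<sigma> (snd p) s)" for p
  have EV: "E \<subseteq> V l" unfolding E_def by (rule E_sub_V[OF A inV])
  have "\<phi> ` (E \<times> P) \<subseteq> V l"
    using EV \<sigma> by (auto simp: \<phi>_def intro!: V_add)
  moreover have "inj_on \<phi> (E \<times> P)"
  proof (rule inj_onI, clarify)
    fix u w u' w' assume u: "u \<in> E" and w: "w \<in> P" and u': "u' \<in> E" and w': "w' \<in> P"
      and eq: "\<phi> (u, w) = \<phi> (u', w')"
    have pu: "prj B x = (\<lambda>_. 0)" if "x \<in> E" for x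
      using that AB unfolding E_def prj_def by (auto intro!: ext)
    have key: "prj B (\<lambda>s. x s + v s) = y" if "prj B x = (\<lambda>_. 0)" "prj B v = y" for x v y
    proof
      fix s show "prj B (\<lambda>s. x s + v s) s = y s"
        using fun_cong[OF that(1), of s] fun_cong[OF that(2), of s]
        by (cases "s \<in> B") (auto simp: prj_def)
    qed
    have "prj B (\<phi> (u, w)) = w"
      unfolding \<phi>_def using key pu[OF u] \<sigma>[OF w] by simp
    moreover have "prj B (\<phi> (u', w')) = w'"
      unfolding \<phi>_def using key pu[OF u'] \<sigma>[OF w'] by simp
    ultimately have ww: "w = w'" using eq by simp
    have "u = u'"
    proof
      fix s show "u s = u' s" using fun_cong[OF eq, of s] ww by (simp add: \<phi>_def)
    qed
    with ww show "u = u' \<and> w = w'" by simp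
  qed
  ultimately have "card (E \<times> P) \<le> card (V l)"
    by (intro card_inj_on_le[OF _ _ finite_V])
  moreover have "card (E \<times> P) = card (UNIV::'a set) ^ card A * card P"
    by (simp add: card_cartesian_product E_def card_E[OF A])
  ultimately show ?thesis by (simp add: P_def)
qed

lemma F5:
  assumes "T \<subseteq> B"
  shows "card (prj T ` V l) \<le> card (prj B ` V l)"
proof -
  have "prj T (prj B v) = prj T v" for v
    using assms by (auto simp: prj_def intro!: ext)
  then have "prj T ` V l = prj T ` (prj B ` V l)"
    by (simp add: image_image)
  then show ?thesis by (metis card_image_le finite_V finite_imageI)
qed

lemma part_basic:
  assumes P: "is_partition_into k M R" and M: "finite M"
  shows "\<And>j. j \<in> {1..k} \<Longrightarrow> R j \<subseteq> M" and "card M = (\<Sum>j\<in>{1..k}. card (R j))"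
    and "\<And>J. J \<subseteq> {1..k} \<Longrightarrow> card (\<Union>j\<in>J. R j) = (\<Sum>j\<in>J. card (R j))"
proof -
  show sub: "\<And>j. j \<in> {1..k} \<Longrightarrow> R j \<subseteq> M" using P unfolding is_partition_into_def by blast
  show gen: "\<And>J. J \<subseteq> {1..k} \<Longrightarrow> card (\<Union>j\<in>J. R j) = (\<Sum>j\<in>J. card (R j))"
  proof -
    fix J assume J: "J \<subseteq> {1..k}"
    show "card (\<Union>j\<in>J. R j) = (\<Sum>j\<in>J. card (R j))"
    proof (rule card_UN_disjoint)
      show "finite J" using J finite_subset by blast
      show "\<forall>j\<in>J. finite (R j)" using J sub M finite_subset by blast
      show "\<forall>j\<in>J. \<forall>j'\<in>J. j \<noteq> j' \<longrightarrow> R j \<inter> R j' = {}"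
        using P J unfolding is_partition_into_def by blast
    qed
  qed
  have "M = (\<Union>j\<in>{1..k}. R j)" using P unfolding is_partition_into_def by blast
  then show "card M = (\<Sum>j\<in>{1..k}. card (R j))" using gen[of "{1..k}"] by simp
qed

lemma part_singletons:
  assumes P: "is_partition_into k M R" and M: "finite M"
  shows "\<exists>J\<subseteq>{1..k}. (\<forall>j\<in>J. card (R j) = 1) \<and> 2 * k \<le> card J + card M"
proof -
  define J where "J = {j\<in>{1..k}. card (R j) = 1}"
  have ne: "card (R j) \<noteq> 0" if "j \<in> {1..k}" for j
  proof -
    have "R j \<noteq> {}" using P that unfolding is_partition_into_def by blast
    moreover have "finite (R j)" using part_basic(1)[OF P M that] M finite_subset by blast
    ultimately show ?thesis by simp
  qed
  have e1: "card M = (\<Sum>j\<in>J. card (R j)) + (\<Sum>j\<in>{1..k}-J. card (R j))"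
  proof -
    have JS: "J \<subseteq> {1..k}" by (auto simp: J_def)
    show ?thesis unfolding part_basic(2)[OF P M]
      using sum.subset_diff[OF JS finite_atLeastAtMost, of "\<lambda>j. card (R j)"] by (simp add: add.commute)
  qed
  have e2: "(\<Sum>j\<in>J. card (R j)) = card J"
  proof -
    have "(\<Sum>j\<in>J. card (R j)) = (\<Sum>j\<in>J. 1)" by (rule sum.cong) (auto simp: J_def)
    then show ?thesis by simp
  qed
  have e3: "(\<Sum>j\<in>{1..k}-J. card (R j)) \<ge> (\<Sum>j\<in>{1..k}-J. 2)"
  proof (rule sum_mono)
    fix j assume "j \<in> {1..k}-J"
    then have "j \<in> {1..k}" "card (R j) \<noteq> 1" by (auto simp: J_def)
    with ne[of j] show "2 \<le> card (R j)" by linarith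
  qed
  have e4: "(\<Sum>j\<in>{1..k}-J. (2::nat)) = 2 * (k - card J)"
  proof -
    have JS: "J \<subseteq> {1..k}" by (auto simp: J_def)
    have "card ({1..k}-J) = k - card J"
      using card_Diff_subset[OF finite_subset[OF JS finite_atLeastAtMost] JS] by simp
    then show ?thesis by simp
  qed
  have "card J + 2 * (k - card J) \<le> card M" using e1 e2 e3 e4 by linarith
  moreover have "card J \<le> k"
  proof -
    have JS: "J \<subseteq> {1..k}" by (auto simp: J_def)
    from card_mono[OF finite_atLeastAtMost JS] show ?thesis by simp
  qed
  ultimately have "2 * k \<le> card J + card M" by linarith
  moreover have "J \<subseteq> {1..k}" "\<forall>j\<in>J. card (R j) = 1" by (auto simp: J_def)
  ultimately show ?thesis by blast
qed

lemma part_meet: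
  assumes P: "is_partition_into k M R" and M: "finite M" and S: "S \<subseteq> M" and c: "card S < k"
  shows "\<exists>j\<in>{1..k}. R j \<inter> S = {}"
proof (rule ccontr)
  assume "\<not> ?thesis"
  then have ne: "R j \<inter> S \<noteq> {}" if "j \<in> {1..k}" for j using that by blast
  have "card (\<Union>j\<in>{1..k}. R j \<inter> S) = (\<Sum>j\<in>{1..k}. card (R j \<inter> S))"
  proof (rule card_UN_disjoint)
    show "\<forall>j\<in>{1..k}. finite (R j \<inter> S)" using S M finite_subset by blast
    show "\<forall>j\<in>{1..k}. \<forall>j'\<in>{1..k}. j \<noteq> j' \<longrightarrow> (R j \<inter> S) \<inter> (R j' \<inter> S) = {}"
      using P unfolding is_partition_into_def by blast
  qed simp
  also have "\<dots> \<ge> (\<Sum>j\<in>{1..k}. 1)"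
    by (rule sum_mono) (metis ne One_nat_def Suc_leI card_gt_0_iff finite_Int finite_subset S M)
  finally have "k \<le> card (\<Union>j\<in>{1..k}. R j \<inter> S)" by simp
  also have "\<dots> \<le> card S" by (rule card_mono) (use S M finite_subset in auto)
  finally show False using c by simp
qed

definition Sx where "Sx i = {l\<in>{1..m}. uv i \<in> V l}"
definition Xl where "Xl l = {i\<in>{1..n}. uv i \<in> V l}"
definition Y where "Y = {i\<in>{1..n}. card (Sx i) \<le> 2*k-m}"
definition Yl where "Yl l = {i\<in>Y. l \<notin> Sx i}"
definition Sets where "Sets = {S. S \<subseteq> {1..m} \<and> card S = 2*k-m}"
definition TS where "TS S = {i\<in>Y. Sx i = S}"

lemma Sx_ge:
  assumes i: "i \<in> {1..n}"
  shows "2*k-m \<le> card (Sx i)"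
proof -
  from recover[OF i] obtain R where P: "is_partition_into k {1..m} R"
    and rec: "\<forall>j\<in>{1..k}. \<exists>h. uv i = (\<lambda>s. \<Sum>l\<in>R j. lin l (h l) s)" by blast
  from part_singletons[OF P] obtain J where J: "J \<subseteq> {1..k}" "\<forall>j\<in>J. card (R j) = 1"
    and c: "2 * k \<le> card J + m" by auto
  have "(\<Union>j\<in>J. R j) \<subseteq> Sx i"
  proof clarify
    fix j l assume j: "j \<in> J" and l: "l \<in> R j"
    from J j obtain l' where Rj: "R j = {l'}" by (metis card_1_singletonE)
    with l have ll: "l' = l" by simp
    from rec J j obtain h where "uv i = (\<lambda>s. \<Sum>l\<in>R j. lin l (h l) s)" by blast
    with Rj ll have "uv i = lin l (h l)" by simp
    moreover have "l \<in> {1..m}"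
    proof -
      have "j \<in> {1..k}" using J j by auto
      then have "R j \<subseteq> {1..m}" by (rule part_basic(1)[OF P finite_atLeastAtMost])
      with l show ?thesis by auto
    qed
    ultimately show "l \<in> Sx i" unfolding Sx_def V_def by auto
  qed
  then have "card (\<Union>j\<in>J. R j) \<le> card (Sx i)" by (intro card_mono) (auto simp: Sx_def)
  moreover have "card (\<Union>j\<in>J. R j) = card J"
    using part_basic(3)[OF P _ J(1)] J(2) by simp
  ultimately show ?thesis using c by simp
qed

lemma tight_rep:
  assumes i: "i \<in> Y"
  shows "\<exists>h. uv i = (\<lambda>s. \<Sum>l\<in>{1..m}-Sx i. lin l (h l) s)"
proof -
  have i1: "i \<in> {1..n}" and ci: "card (Sx i) \<le> 2*k-m" using i by (auto simp: Y_def)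
  from recover[OF i1] obtain R where P: "is_partition_into k {1..m} R"
    and rec: "\<forall>j\<in>{1..k}. \<exists>h. uv i = (\<lambda>s. \<Sum>l\<in>R j. lin l (h l) s)" by blast
  have "card (Sx i) < k" using ci km by linarith
  have "Sx i \<subseteq> {1..m}" by (auto simp: Sx_def)
  from part_meet[OF P _ this] \<open>card (Sx i) < k\<close> obtain j where j: "j \<in> {1..k}" "R j \<inter> Sx i = {}"
    by auto
  from rec j obtain h where h: "uv i = (\<lambda>s. \<Sum>l\<in>R j. lin l (h l) s)" by blast
  have Rj: "R j \<subseteq> {1..m} - Sx i" using part_basic(1)[OF P _ j(1)] j(2) by auto
  define h' where "h' l = (if l \<in> R j then h l else (\<lambda>_. 0))" for l
  have "uv i = (\<lambda>s. \<Sum>l\<in>{1..m}-Sx i. lin l (h' l) s)"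
  proof
    fix s
    have "(\<Sum>l\<in>{1..m}-Sx i. lin l (h' l) s) = (\<Sum>l\<in>R j. lin l (h' l) s)"
      by (rule sum.mono_neutral_right) (use Rj in \<open>auto simp: h'_def lin_zero\<close>)
    also have "\<dots> = (\<Sum>l\<in>R j. lin l (h l) s)" by (simp add: h'_def)
    finally show "uv i s = (\<Sum>l\<in>{1..m}-Sx i. lin l (h' l) s)" using h by simp
  qed
  then show ?thesis by blast
qed

lemma F4:
  assumes S: "S \<in> Sets"
  shows "card (UNIV::'a set) ^ card (TS S) \<le> (\<Prod>l\<in>{1..m}-S. card (prj (TS S) ` V l))"
proof -
  define T where "T = TS S"
  define L where "L = {1..m} - S"
  have Tn: "T \<subseteq> {1..n}" by (auto simp: T_def TS_def Y_def)
  have fT: "finite T" using finite_subset[OF Tn] by simp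
  have fL: "finite L" by (simp add: L_def)
  have "\<forall>i\<in>T. \<exists>h. uv i = (\<lambda>s. \<Sum>l\<in>L. lin l (h l) s)"
  proof
    fix i assume i: "i \<in> T"
    then have "i \<in> Y" "Sx i = S" by (auto simp: T_def TS_def)
    have "\<exists>h. uv i = (\<lambda>s. \<Sum>l\<in>{1..m}-Sx i. lin l (h l) s)" by (rule tight_rep) fact
    then show "\<exists>h. uv i = (\<lambda>s. \<Sum>l\<in>L. lin l (h l) s)" by (simp only: L_def \<open>Sx i = S\<close>)
  qed
  then obtain H where H: "\<And>i. i \<in> T \<Longrightarrow> uv i = (\<lambda>s. \<Sum>l\<in>L. lin l (H i l) s)" by metis
  define W where "W = (\<lambda>w. \<lambda>s. \<Sum>l\<in>L. w l s) ` PiE L (\<lambda>l. prj T ` V l)"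
  have "range (prj T) \<subseteq> W"
  proof
    fix v assume "v \<in> range (prj T)"
    then obtain c where v: "v = prj T c" by auto
    define g where "g l = (\<lambda>t. \<Sum>i\<in>T. c i * H i l t)" for l
    have pc: "prj T c = (\<lambda>s. \<Sum>l\<in>L. lin l (g l) s)"
      unfolding g_def by (rule G1[OF fT fL H])
    define w where "w = restrict (\<lambda>l. prj T (lin l (g l))) L"
    have wP: "w \<in> PiE L (\<lambda>l. prj T ` V l)" by (auto simp: w_def V_def)
    have "v = (\<lambda>s. \<Sum>l\<in>L. w l s)"
    proof
      fix s
      have "v s = prj T c s" using v by simp
      also have "\<dots> = (if s \<in> T then (\<Sum>l\<in>L. lin l (g l) s) else 0)"
        by (cases "s \<in> T") (use fun_cong[OF pc, of s] in \<open>auto simp: prj_def\<close>)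
      also have "\<dots> = (\<Sum>l\<in>L. w l s)"
        by (cases "s \<in> T") (auto simp: w_def prj_def)
      finally show "v s = (\<Sum>l\<in>L. w l s)" .
    qed
    with wP show "v \<in> W" unfolding W_def by blast
  qed
  then have "card (range (prj T)) \<le> card W"
    by (intro card_mono) (auto simp: W_def fL finite_V intro!: finite_imageI finite_PiE)
  also have "\<dots> \<le> card (PiE L (\<lambda>l. prj T ` V l))"
    unfolding W_def by (intro card_image_le finite_PiE fL) (simp add: finite_V)
  also have "\<dots> = (\<Prod>l\<in>L. card (prj T ` V l))" by (simp add: card_PiE fL)
  finally show ?thesis using card_E[OF fT] by (simp add: T_def L_def)
qed

lemma finite_Sets: "finite Sets"
  by (rule finite_subset[of _ "Pow {1..m}"]) (auto simp: Sets_def)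

lemma count_Sets:
  assumes l: "l \<in> {1..m}"
  shows "card {S\<in>Sets. l \<notin> S} = (m - 1) choose (2*k-m)"
proof -
  have "{S\<in>Sets. l \<notin> S} = {B. B \<subseteq> {1..m}-{l} \<and> card B = 2*k-m}"
    by (auto simp: Sets_def)
  moreover have "card ({1..m}-{l}) = m - 1" using l by simp
  ultimately show ?thesis by (simp add: n_subsets)
qed

lemma step6: "(2*k-m) * n + card ({1..n} - Y) \<le> (\<Sum>l\<in>{1..m}. card (Xl l))"
proof -
  have "(\<Sum>l\<in>{1..m}. card (Xl l)) = (\<Sum>l\<in>{1..m}. \<Sum>i\<in>{1..n}. if uv i \<in> V l then 1 else 0)"
    unfolding Xl_def by (simp add: sum.inter_filter[symmetric])
  also have "\<dots> = (\<Sum>i\<in>{1..n}. \<Sum>l\<in>{1..m}. if uv i \<in> V l then 1 else 0)"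
    by (rule sum.swap)
  also have "\<dots> = (\<Sum>i\<in>{1..n}. card (Sx i))"
    unfolding Sx_def by (simp add: sum.inter_filter[symmetric])
  finally have e: "(\<Sum>l\<in>{1..m}. card (Xl l)) = (\<Sum>i\<in>{1..n}. card (Sx i))" .
  have "(\<Sum>i\<in>{1..n}. card (Sx i)) \<ge> (\<Sum>i\<in>{1..n}. (2*k-m) + (if i \<in> Y then 0 else 1))"
  proof (rule sum_mono)
    fix i assume i: "i \<in> {1..n}"
    show "(2*k-m) + (if i \<in> Y then 0 else 1) \<le> card (Sx i)"
      using Sx_ge[OF i] i by (auto simp: Y_def)
  qed
  also have "(\<Sum>i\<in>{1..n}. (2*k-m) + (if i \<in> Y then 0 else (1::nat))) = (2*k-m) * n + card ({1..n} - Y)"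
    by (simp add: sum.distrib sum.If_cases Diff_eq)
  finally show ?thesis using e by simp
qed

lemma step5: "(\<Sum>S\<in>Sets. card (TS S)) = card Y"
proof -
  have "Y = (\<Union>S\<in>Sets. TS S)"
  proof
    show "Y \<subseteq> (\<Union>S\<in>Sets. TS S)"
    proof
      fix i assume i: "i \<in> Y"
      then have "card (Sx i) = 2*k-m" using Sx_ge by (force simp: Y_def)
      then have "Sx i \<in> Sets" by (auto simp: Sets_def Sx_def)
      with i show "i \<in> (\<Union>S\<in>Sets. TS S)" by (auto simp: TS_def)
    qed
  qed (auto simp: TS_def)
  moreover have "card (\<Union>S\<in>Sets. TS S) = (\<Sum>S\<in>Sets. card (TS S))"
  proof (rule card_UN_disjoint[OF finite_Sets])
    show "\<forall>S\<in>Sets. finite (TS S)"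
      by (auto intro: finite_subset[of _ "{1..n}"] simp: TS_def Y_def)
  qed (auto simp: TS_def)
  ultimately show ?thesis by simp
qed

lemma q2: "2 \<le> card (UNIV::'a set)"
proof -
  have "card {0::'a, 1} \<le> card (UNIV::'a set)" by (rule card_mono) auto
  then show ?thesis by simp
qed

lemma card_prj_pos: "0 < card (prj B ` V l)"
  using finite_V V_nonempty by (simp add: card_gt_0_iff)

lemma step1:
  assumes l: "l \<in> {1..m}"
  shows "real (card (Xl l)) * ln (real (card (UNIV::'a set))) + ln (real (card (prj (Yl l) ` V l)))
     \<le> real (Nb l) * ln (real (card (UNIV::'a set)))"
proof -
  let ?q = "card (UNIV::'a set)"
  have fX: "finite (Xl l)" by (auto simp: Xl_def)
  have dis: "Xl l \<inter> Yl l = {}" using l by (auto simp: Xl_def Yl_def Sx_def)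
  have inV: "\<forall>i\<in>Xl l. uv i \<in> V l" by (auto simp: Xl_def)
  have "?q ^ card (Xl l) * card (prj (Yl l) ` V l) \<le> ?q ^ Nb l"
    using F3[OF fX dis inV] card_V[of l] by linarith
  then have "real (?q ^ card (Xl l) * card (prj (Yl l) ` V l)) \<le> real (?q ^ Nb l)"
    by (simp only: of_nat_le_iff)
  then have "ln (real (?q ^ card (Xl l) * card (prj (Yl l) ` V l))) \<le> ln (real (?q ^ Nb l))"
    using q2 card_prj_pos by (subst ln_le_cancel_iff) auto
  then show ?thesis
    using q2 card_prj_pos by (simp add: ln_mult ln_realpow)
qed

lemma step2:
  assumes l: "l \<in> {1..m}"
  shows "(\<Sum>S\<in>{S\<in>Sets. l \<notin> S}. ln (real (card (prj (TS S) ` V l))))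
     \<le> real ((m - 1) choose (2*k-m)) * ln (real (card (prj (Yl l) ` V l)))"
proof -
  have "(\<Sum>S\<in>{S\<in>Sets. l \<notin> S}. ln (real (card (prj (TS S) ` V l))))
     \<le> (\<Sum>S\<in>{S\<in>Sets. l \<notin> S}. ln (real (card (prj (Yl l) ` V l))))"
  proof (rule sum_mono)
    fix S assume S: "S \<in> {S\<in>Sets. l \<notin> S}"
    have "TS S \<subseteq> Yl l" using S by (auto simp: TS_def Yl_def)
    then have "card (prj (TS S) ` V l) \<le> card (prj (Yl l) ` V l)" by (rule F5)
    then show "ln (real (card (prj (TS S) ` V l))) \<le> ln (real (card (prj (Yl l) ` V l)))"
      using card_prj_pos by (subst ln_le_cancel_iff) auto
  qed
  also have "\<dots> = real ((m - 1) choose (2*k-m)) * ln (real (card (prj (Yl l) ` V l)))"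
    using count_Sets[OF l] by simp
  finally show ?thesis .
qed

lemma step4:
  assumes S: "S \<in> Sets"
  shows "real (card (TS S)) * ln (real (card (UNIV::'a set)))
     \<le> (\<Sum>l\<in>{1..m}-S. ln (real (card (prj (TS S) ` V l))))"
proof -
  let ?q = "card (UNIV::'a set)"
  have "real (?q ^ card (TS S)) \<le> real (\<Prod>l\<in>{1..m}-S. card (prj (TS S) ` V l))"
    using F4[OF S] by (simp only: of_nat_le_iff)
  then have "ln (real (?q ^ card (TS S))) \<le> ln (\<Prod>l\<in>{1..m}-S. real (card (prj (TS S) ` V l)))"
    using q2 card_prj_pos by (subst ln_le_cancel_iff) (auto simp: prod_pos)
  also have "\<dots> = (\<Sum>l\<in>{1..m}-S. ln (real (card (prj (TS S) ` V l))))"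
    using card_prj_pos by (subst ln_prod) auto
  finally show ?thesis using q2 by (simp add: ln_realpow)
qed

lemma step3:
  "(\<Sum>l\<in>{1..m}. \<Sum>S\<in>{S\<in>Sets. l \<notin> S}. f S l) = (\<Sum>S\<in>Sets. \<Sum>l\<in>{1..m}-S. (f S l :: real))"
proof -
  have "(\<Sum>l\<in>{1..m}. \<Sum>S\<in>{S\<in>Sets. l \<notin> S}. f S l) = (\<Sum>l\<in>{1..m}. \<Sum>S\<in>Sets. if l \<notin> S then f S l else 0)"
    by (simp add: sum.inter_filter[OF finite_Sets])
  also have "\<dots> = (\<Sum>S\<in>Sets. \<Sum>l\<in>{1..m}. if l \<notin> S then f S l else 0)" by (rule sum.swap)
  also have "\<dots> = (\<Sum>S\<in>Sets. \<Sum>l\<in>{1..m}-S. f S l)"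
  proof (rule sum.cong[OF refl])
    fix S
    have e: "{1..m}-S = {l\<in>{1..m}. l \<notin> S}" by auto
    show "(\<Sum>l\<in>{1..m}. if l \<notin> S then f S l else 0) = (\<Sum>l\<in>{1..m}-S. f S l)"
      by (simp only: e sum.inter_filter[OF finite_atLeastAtMost])
  qed
  finally show ?thesis .
qed

lemma bound:
  "(2 * real k - real m + 1 / real ((m - 1) choose (2 * k - m))) * real n \<le> real (\<Sum>l\<in>{1..m}. Nb l)"
proof -
  define lq where "lq = ln (real (card (UNIV::'a set)))"
  define C where "C = (m - 1) choose (2*k-m)"
  define a where "a l = ln (real (card (prj (Yl l) ` V l)))" for l
  have lq: "lq > 0" unfolding lq_def using q2 by simp
  have C: "C \<ge> 1" unfolding C_def using km by (simp add: Suc_le_eq)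
  have Yn: "Y \<subseteq> {1..n}" by (auto simp: Y_def)
  have cY: "card Y \<le> n" using card_mono[OF finite_atLeastAtMost Yn] by simp
  have s1: "(\<Sum>l\<in>{1..m}. real (card (Xl l)) * lq + a l) \<le> (\<Sum>l\<in>{1..m}. real (Nb l) * lq)"
    by (rule sum_mono) (use step1 in \<open>simp add: lq_def a_def\<close>)
  have "real (card Y) * lq = (\<Sum>S\<in>Sets. real (card (TS S)) * lq)"
    using step5 by (simp add: sum_distrib_right[symmetric] of_nat_sum[symmetric])
  also have "\<dots> \<le> (\<Sum>S\<in>Sets. \<Sum>l\<in>{1..m}-S. ln (real (card (prj (TS S) ` V l))))"
    by (rule sum_mono) (use step4 in \<open>simp add: lq_def\<close>)
  also have "\<dots> = (\<Sum>l\<in>{1..m}. \<Sum>S\<in>{S\<in>Sets. l \<notin> S}. ln (real (card (prj (TS S) ` V l))))"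
    by (rule step3[symmetric])
  also have "\<dots> \<le> (\<Sum>l\<in>{1..m}. real C * a l)"
    by (rule sum_mono) (use step2 in \<open>simp add: C_def a_def\<close>)
  finally have s2: "real (card Y) * lq \<le> real C * (\<Sum>l\<in>{1..m}. a l)"
    by (simp add: sum_distrib_left)
  have s6: "real ((2*k-m) * n + card ({1..n} - Y)) \<le> (\<Sum>l\<in>{1..m}. real (card (Xl l)))"
    using step6 by (simp only: of_nat_le_iff of_nat_sum[symmetric])
  have cd: "card ({1..n} - Y) = n - card Y" using card_Diff_subset[OF finite_subset[OF Yn] Yn] by simp
  have km2: "real (2*k-m) = 2 * real k - real m" using km by simp
  have main: "(real ((2*k-m) * n) + real (n - card Y)) * lq + real (card Y) * lq / real C
      \<le> (\<Sum>l\<in>{1..m}. real (Nb l)) * lq"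
  proof -
    have "(\<Sum>l\<in>{1..m}. real (card (Xl l)) * lq + a l)
        = (\<Sum>l\<in>{1..m}. real (card (Xl l))) * lq + (\<Sum>l\<in>{1..m}. a l)"
      by (simp add: sum.distrib sum_distrib_right)
    moreover have "real (card Y) * lq / real C \<le> (\<Sum>l\<in>{1..m}. a l)"
      using s2 C by (simp add: divide_le_eq mult.commute)
    moreover have "(real ((2*k-m) * n) + real (n - card Y)) * lq \<le> (\<Sum>l\<in>{1..m}. real (card (Xl l))) * lq"
      using s6 cd lq by (intro mult_right_mono) auto
    ultimately show ?thesis using s1 by (simp add: sum_distrib_right)
  qed
  have "(2 * real k - real m + 1 / real C) * real n
      \<le> real ((2*k-m) * n) + real (n - card Y) + real (card Y) / real C"
  proof -
    have "real n / real C = real (n - card Y) / real C + real (card Y) / real C"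
      using cY by (simp add: of_nat_diff add_divide_distrib[symmetric])
    moreover have "real (n - card Y) / real C \<le> real (n - card Y)"
      proof -
      have "real (n - card Y) * 1 \<le> real (n - card Y) * real C"
        by (rule mult_left_mono) (use C in auto)
      then show ?thesis using C by (simp add: divide_le_eq)
    qed
    ultimately show ?thesis using km2 by (simp add: distrib_right)
  qed
  also have "\<dots> \<le> (\<Sum>l\<in>{1..m}. real (Nb l))"
  proof (rule mult_right_le_imp_le)
    show "(real ((2*k-m) * n) + real (n - card Y) + real (card Y) / real C) * lq
        \<le> (\<Sum>l\<in>{1..m}. real (Nb l)) * lq"
      using main by (simp add: distrib_right)
  qed (rule lq)
  finally show ?thesis by (simp add: C_def)
qed

end

lemma exists_code:
  fixes n k m :: nat
  assumes "0 < n" "0 < k" "k < m"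
  shows "is_PIR_array_code n k m (\<lambda>_. n) (\<lambda>l t s. if t = s then (1::'a::{finite,field}) else 0)"
proof -
  define R where "R j = (if j < k then {j} else {k..m})" for j
  have km': "k \<le> m" using assms by simp
  have P1: "\<forall>j\<in>{1..k}. R j \<noteq> {}" using km' by (auto simp: R_def)
  have P2: "(\<Union>j\<in>{1..k}. R j) = {1..m}"
  proof
    show "(\<Union>j\<in>{1..k}. R j) \<subseteq> {1..m}" using assms by (auto simp: R_def split: if_splits)
    show "{1..m} \<subseteq> (\<Union>j\<in>{1..k}. R j)"
    proof
      fix x assume x: "x \<in> {1..m}"
      show "x \<in> (\<Union>j\<in>{1..k}. R j)"
      proof (cases "x < k")
        case True
        then have "x \<in> R x" "x \<in> {1..k}" using x by (auto simp: R_def)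
        then show ?thesis by blast
      next
        case False
        then have "x \<in> R k" "k \<in> {1..k}" using x assms by (auto simp: R_def)
        then show ?thesis by blast
      qed
    qed
  qed
  have P3: "\<forall>j\<in>{1..k}. \<forall>j'\<in>{1..k}. j \<noteq> j' \<longrightarrow> R j \<inter> R j' = {}"
    by (auto simp: R_def)
  have P: "is_partition_into k {1..m} R"
    unfolding is_partition_into_def using P1 P2 P3 by blast
  have "\<forall>j\<in>{1..k}. \<exists>(f :: nat \<Rightarrow> nat \<Rightarrow> 'a) (a :: nat \<Rightarrow> 'a). \<forall>x :: nat \<Rightarrow> 'a.
      x i = (\<Sum>l\<in>R j. a l * (\<Sum>t\<in>{1..n}. f l t *
         bucket_val n (\<lambda>l t s. if t = s then (1::'a) else 0) x l t))" if i: "i \<in> {1..n}" for i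
  proof
    fix j assume j: "j \<in> {1..k}"
    have jR: "j \<in> R j" "finite (R j)" using j km' by (auto simp: R_def)
    show "\<exists>(f :: nat \<Rightarrow> nat \<Rightarrow> 'a) (a :: nat \<Rightarrow> 'a). \<forall>x :: nat \<Rightarrow> 'a.
      x i = (\<Sum>l\<in>R j. a l * (\<Sum>t\<in>{1..n}. f l t *
         bucket_val n (\<lambda>l t s. if t = s then (1::'a) else 0) x l t))"
    proof (intro exI allI)
      fix x :: "nat \<Rightarrow> 'a"
      have bv: "bucket_val n (\<lambda>l t s. if t = s then (1::'a) else 0) x l t = (if t \<in> {1..n} then x t else 0)" for l t
        unfolding bucket_val_def by (simp add: if_distrib[where f="\<lambda>y. y * _"] cong: if_cong)
      have "(\<Sum>t\<in>{1..n}. (if t = i then 1 else 0) * bucket_val n (\<lambda>l t s. if t = s then (1::'a) else 0) x l t) = x i"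
        for l using i by (simp add: bv if_distrib[where f="\<lambda>y. y * _"] cong: if_cong)
      then show "x i = (\<Sum>l\<in>R j. (if l = j then 1 else 0) * (\<Sum>t\<in>{1..n}. (\<lambda>l t. if t = i then 1 else 0) l t *
         bucket_val n (\<lambda>l t s. if t = s then (1::'a) else 0) x l t))"
        using jR by (simp add: if_distrib[where f="\<lambda>y. y * _"] cong: if_cong)
    qed
  qed
  then show ?thesis using P assms unfolding is_PIR_array_code_def by auto
qed

theorem theorem3p2:
  fixes n k m :: nat
  assumes "0 < n" and "0 < k" and "0 < m" and "k < m" and "m < 2 * k"
  shows "real (N_P TYPE('a::{finite,field}) n k m)
           \<ge> (2 * real k - real m + 1 / real ((m - 1) choose (2 * k - m))) * real n"
proof -
  let ?P = "\<lambda>N. \<exists>Nb (G :: nat \<Rightarrow> nat \<Rightarrow> nat \<Rightarrow> 'a).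
       is_PIR_array_code n k m Nb G \<and> (\<Sum>l\<in>{1..m}. Nb l) = N"
  have ex: "\<exists>N. ?P N"
    using exists_code[OF assms(1,2,4)] by blast
  have "?P (LEAST N. ?P N)" by (rule LeastI_ex[OF ex])
  then obtain Nb and G :: "nat \<Rightarrow> nat \<Rightarrow> nat \<Rightarrow> 'a" where c: "is_PIR_array_code n k m Nb G"
    and e: "(\<Sum>l\<in>{1..m}. Nb l) = (LEAST N. ?P N)" by blast
  interpret pir n k m Nb G using c assms by unfold_locales auto
  have "N_P TYPE('a) n k m = (\<Sum>l\<in>{1..m}. Nb l)" unfolding N_P_def e ..
  with bound show ?thesis by simp
qed

end
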